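(* Let $G$ be a finitely generated amenable group, $S=\{g_1,\dots,g_d\}$ a finite generating set of $G$, $\mathcal C$ a finite set of colors, and $T$ a finite set of Wang tiles on $\mathcal C$ and $S$. If there is a tiling of $G$ with the tiles $T$, i.e. the $G$-Wang subshift $X_T=\{x\in T^G : \forall g\in G,\ \forall s\in S\cup S^{-1},\ x_g(s)=x_{gs}(s^{-1})\}$ is nonempty, then the graphs $\Gamma_1,\dots,\Gamma_d$ associated to $T$ satisfy condition $(\star\star)$ (equivalently, $T$ satisfies condition $(\star\star)'$).
   Context: A Wang tile on $\mathcal C$ and $S$ is a map $\tau: S\cup S^{-1}\to\mathcal C$. The graphs associated to $T$: for each $1\le i\le d$, $\Gamma_i$ is the directed graph with vertex set $T$ and an edge $\tau\to\tau'$ iff $\tau(g_i)=\tau'(g_i^{-1})$. A cycle in a directed graph is a closed walk $\overline{a_1,\dots,a_n}$ (repetitions allowed) with edges $a_k\to a_{k+1}$ for $k<n$ and $a_n\to a_1$; it is simple if the $a_k$ are pairwise distinct. For a cycle $w$ and vertex $a$, $|w|_a=\#\{k:a_k=a\}$. Let $\{\omega_i^1,\dots,\omega_i^{m_i}\}$ be the finite set of simple cycles of $\Gamma_i$ (up to cyclic rotation). Condition $(\star\star)$: every $\Gamma_i$ contains at least one cycle, and there exist nonnegative reals $x_{i,j}$, not all zero, such that for every $a\in T$, $\sum_{j=1}^{m_1}x_{1,j}|\omega_1^j|_a=\dots=\sum_{j=1}^{m_d}x_{d,j}|\omega_d^j|_a$. Condition $(\star\star)'$: with $c_g=\{\tau\in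 T:\tau(g)=c\}$ for $g\in S\cup S^{-1}$, $c\in\mathcal C$, there exist nonnegative reals $(x_\tau)_{\tau\in T}$, not all zero, with $\sum_{\tau\in c_g}x_\tau=\sum_{\tau\in c_{g^{-1}}}x_\tau$ for all $g\in S$, $c\in\mathcal C$. *)

theory Defs
  imports "HOL-Algebra.Algebra"
begin

definition amenable_group :: "('g, 'b) monoid_scheme \<Rightarrow> bool" where
  "amenable_group G \<longleftrightarrow> group G \<and>
     (\<forall>K (\<epsilon>::real). finite K \<and> K \<subseteq> carrier G \<and> \<epsilon> > 0 \<longrightarrow>
        (\<exists>F. finite F \<and> F \<noteq> {} \<and> F \<subseteq> carrier G \<and>
             (\<forall>k\<in>K. real (card ((((\<lambda>f. k \<otimes>\<^bsub>G\<^esub> f) ` F) - F) \<union> (F - ((\<lambda>f. k \<otimes>\<^bsub>G\<^esub> f) ` F))))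
                      \<le> \<epsilon> * real (card F))))"

definition sym_gens :: "('g, 'b) monoid_scheme \<Rightarrow> 'g list \<Rightarrow> 'g set" where
  "sym_gens G gs = set gs \<union> (\<lambda>s. inv\<^bsub>G\<^esub> s) ` set gs"

definition wang_subshift ::
  "('g, 'b) monoid_scheme \<Rightarrow> 'g list \<Rightarrow> ('g \<Rightarrow> 'c) set \<Rightarrow> ('g \<Rightarrow> 'g \<Rightarrow> 'c) set" where
  "wang_subshift G gs T = {x. x \<in> carrier G \<rightarrow> T \<and>
      (\<forall>g\<in>carrier G. \<forall>s\<in>sym_gens G gs. x g s = x (g \<otimes>\<^bsub>G\<^esub> s) (inv\<^bsub>G\<^esub> s))}"

text \<open>Edge relation of the graph Gamma_i (i is 0-based: generator gs ! i).\<close>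
definition wang_edge ::
  "('g, 'b) monoid_scheme \<Rightarrow> 'g list \<Rightarrow> nat \<Rightarrow> ('g \<Rightarrow> 'c) \<Rightarrow> ('g \<Rightarrow> 'c) \<Rightarrow> bool" where
  "wang_edge G gs i \<tau> \<tau>' \<longleftrightarrow> \<tau> (gs ! i) = \<tau>' (inv\<^bsub>G\<^esub> (gs ! i))"

definition is_cycle :: "'v set \<Rightarrow> ('v \<Rightarrow> 'v \<Rightarrow> bool) \<Rightarrow> 'v list \<Rightarrow> bool" where
  "is_cycle V E w \<longleftrightarrow> w \<noteq> [] \<and> set w \<subseteq> V \<and>
     (\<forall>k. Suc k < length w \<longrightarrow> E (w ! k) (w ! Suc k)) \<and> E (last w) (hd w)"

definition is_simple_cycle :: "'v set \<Rightarrow> ('v \<Rightarrow> 'v \<Rightarrow> bool) \<Rightarrow> 'v list \<Rightarrow> bool" where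
  "is_simple_cycle V E w \<longleftrightarrow> is_cycle V E w \<and> distinct w"

definition simple_cycle_classes :: "'v set \<Rightarrow> ('v \<Rightarrow> 'v \<Rightarrow> bool) \<Rightarrow> 'v list set set" where
  "simple_cycle_classes V E = {{rotate k w | k. True} | w. is_simple_cycle V E w}"

definition cycle_mult :: "'v list set \<Rightarrow> 'v \<Rightarrow> nat" where
  "cycle_mult \<omega> a = count_list (SOME w. w \<in> \<omega>) a"

text \<open>Condition (star star) for the graphs Gamma_1..Gamma_d (indices 0..d-1).\<close>
definition cond_star_star ::
  "('g, 'b) monoid_scheme \<Rightarrow> 'g list \<Rightarrow> ('g \<Rightarrow> 'c) set \<Rightarrow> bool" where
  "cond_star_star G gs T \<longleftrightarrow>
     (\<forall>i < length gs. \<exists>w. is_cycle T (wang_edge G gs i) w) \<and>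
     (\<exists>x :: nat \<Rightarrow> ('g \<Rightarrow> 'c) list set \<Rightarrow> real.
        (\<forall>i < length gs. \<forall>\<omega> \<in> simple_cycle_classes T (wang_edge G gs i). x i \<omega> \<ge> 0) \<and>
        (\<exists>i < length gs. \<exists>\<omega> \<in> simple_cycle_classes T (wang_edge G gs i). x i \<omega> \<noteq> 0) \<and>
        (\<forall>a\<in>T. \<forall>i < length gs. \<forall>j < length gs.
           (\<Sum>\<omega>\<in>simple_cycle_classes T (wang_edge G gs i). x i \<omega> * real (cycle_mult \<omega> a)) =
           (\<Sum>\<omega>\<in>simple_cycle_classes T (wang_edge G gs j). x j \<omega> * real (cycle_mult \<omega> a))))"

end

theory Submission
  imports Defs "HOL-Analysis.Analysis"
begin


lemma find_simple_cycle:
  assumes fin: "finite U" and ne: "U \<noteq> {}" and succ: "\<forall>a\<in>U. \<exists>b\<in>U. E a b"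
  shows "\<exists>w. is_simple_cycle U E w"
proof -
  obtain a0 where a0: "a0 \<in> U" using ne by blast
  define nx where "nx x = (SOME b. b \<in> U \<and> E x b)" for x
  have nx: "nx x \<in> U \<and> E x (nx x)" if "x \<in> U" for x
  proof -
    have "\<exists>b. b \<in> U \<and> E x b" using succ that by blast
    then show ?thesis unfolding nx_def by (rule someI_ex)
  qed
  define f where "f = rec_nat a0 (\<lambda>_ x. nx x)"
  have f0: "f 0 = a0" and fS: "f (Suc n) = nx (f n)" for n by (simp_all add: f_def)
  have fU: "f n \<in> U" for n
  proof (induction n)
    case 0 then show ?case using a0 f0 by simp
  next
    case (Suc n) then show ?case using nx fS by simp
  qed
  have fE: "E (f n) (f (Suc n))" for n using nx[OF fU[of n]] fS[of n] by simp
  have ninj: "\<not> inj_on f {0..card U}"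
  proof
    assume inj: "inj_on f {0..card U}"
    have "card (f ` {0..card U}) \<le> card U"
      by (rule card_mono[OF fin]) (use fU in blast)
    moreover have "card (f ` {0..card U}) = Suc (card U)"
      using card_image[OF inj] by simp
    ultimately show False by simp
  qed
  obtain i j where ij: "i \<noteq> j" "f i = f j"
    using ninj unfolding inj_on_def by blast
  have ex: "\<exists>j. \<exists>i<j. f i = f j"
  proof (cases "i < j")
    case True then show ?thesis using ij by blast
  next
    case False then have "j < i" using ij by simp
    then show ?thesis using ij by metis
  qed
  define j0 where "j0 = (LEAST j. \<exists>i<j. f i = f j)"
  have "\<exists>i<j0. f i = f j0" unfolding j0_def using LeastI_ex[OF ex] .
  then obtain i0 where i0: "i0 < j0" "f i0 = f j0" by blast
  have minj: "f k \<noteq> f l" if "k < l" "l < j0" for k l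
  proof
    assume "f k = f l"
    then have "\<exists>i<l. f i = f l" using that by blast
    then have "j0 \<le> l" unfolding j0_def by (rule Least_le)
    then show False using that by simp
  qed
  define w where "w = map f [i0..<j0]"
  have "w \<noteq> []" using i0 by (simp add: w_def)
  moreover have "set w \<subseteq> U" using fU by (auto simp: w_def)
  moreover have "E (w ! k) (w ! Suc k)" if "Suc k < length w" for k
    using that fE[of "i0 + k"] by (simp add: w_def)
  moreover have "E (last w) (hd w)"
  proof -
    have "last w = f (j0 - 1)" using i0 by (simp add: w_def last_map)
    moreover have "hd w = f j0" using i0 by (simp add: w_def hd_map)
    moreover have "Suc (j0 - 1) = j0" using i0 by simp
    ultimately show ?thesis using fE[of "j0 - 1"] by simp
  qed
  moreover have "distinct w"
  proof -
    have "inj_on f {i0..<j0}"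
    proof (rule inj_onI)
      fix k l assume k: "k \<in> {i0..<j0}" and l: "l \<in> {i0..<j0}" and eq: "f k = f l"
      show "k = l"
      proof (rule ccontr)
        assume "k \<noteq> l"
        then have "k < l \<or> l < k" by linarith
        then show False using minj k l eq by (metis atLeastLessThan_iff)
      qed
    qed
    then show ?thesis by (simp add: w_def distinct_map)
  qed
  ultimately show ?thesis unfolding is_simple_cycle_def is_cycle_def by blast
qed

lemma count_list_rotate1: "count_list (rotate1 xs) a = count_list xs a"
  by (cases xs) auto

lemma count_list_rotate: "count_list (rotate k xs) a = count_list xs a"
  by (induction k) (auto simp: count_list_rotate1)

lemma cycle_out_in:
  assumes "is_cycle V (\<lambda>a b. out a = inn b) w"
  shows "map out w = map inn (rotate1 w)"
proof -
  obtain a ws where w: "w = a # ws" using assms unfolding is_cycle_def by (cases w) auto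
  have L: "length (map out w) = length (map inn (rotate1 w))" by simp
  show ?thesis
  proof (rule nth_equalityI[OF L])
    fix k assume k: "k < length (map out w)"
    show "map out w ! k = map inn (rotate1 w) ! k"
    proof (cases "Suc k < length w")
      case True
      then have "out (w ! k) = inn (w ! Suc k)" using assms unfolding is_cycle_def by blast
      moreover have "rotate1 w ! k = w ! Suc k" using True by (simp add: w nth_append)
      ultimately show ?thesis using True by simp
    next
      case False
      then have kk: "k = length ws" using k w by simp
      have "out (last w) = inn (hd w)" using assms unfolding is_cycle_def by blast
      moreover have "last w = w ! k" using kk by (simp add: w last_conv_nth)
      moreover have "rotate1 w ! k = hd w" using kk by (simp add: w nth_append)
      ultimately show ?thesis using k by simp
    qed
  qed
qed

lemma cycle_card_balance:
  assumes "is_cycle V (\<lambda>a b. out a = inn b) w" "distinct w"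
  shows "card {a \<in> set w. out a = c} = card {a \<in> set w. inn a = c}"
proof -
  have "card {a \<in> set w. out a = c} = length (filter (\<lambda>a. out a = c) w)"
    using assms(2) by (simp add: distinct_length_filter Collect_conj_eq Int_commute)
  also have "\<dots> = count_list (map out w) c"
    by (simp add: count_list_eq_length_filter filter_map comp_def eq_commute)
  also have "\<dots> = count_list (map inn (rotate1 w)) c" using cycle_out_in[OF assms(1)] by simp
  also have "\<dots> = count_list (map inn w) c"
    by (metis count_list_rotate1 rotate1_map)
  also have "\<dots> = length (filter (\<lambda>a. inn a = c) w)"
    by (simp add: count_list_eq_length_filter filter_map comp_def eq_commute)
  also have "\<dots> = card {a \<in> set w. inn a = c}"
    using assms(2) by (simp add: distinct_length_filter Collect_conj_eq Int_commute)
  finally show ?thesis .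
qed

lemma finite_classes:
  assumes "finite V"
  shows "finite (simple_cycle_classes V E)"
proof -
  have eq: "simple_cycle_classes V E = (\<lambda>w. {rotate k w | k. True}) ` {w. is_simple_cycle V E w}"
    unfolding simple_cycle_classes_def by blast
  have sub: "{w. is_simple_cycle V E w} \<subseteq> {xs. set xs \<subseteq> V \<and> distinct xs}"
    unfolding is_simple_cycle_def is_cycle_def by blast
  have "finite {w. is_simple_cycle V E w}"
    by (rule finite_subset[OF sub finite_subset_distinct[OF assms]])
  then show ?thesis unfolding eq by (rule finite_imageI)
qed

lemma cycle_mult_class:
  assumes "distinct w"
  shows "cycle_mult {rotate k w | k. True} a = (if a \<in> set w then 1 else 0)"
proof -
  have "(SOME v. v \<in> {rotate k w | k. True}) \<in> {rotate k w | k. True}"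
    by (rule someI_ex) blast
  then obtain k where "(SOME v. v \<in> {rotate k w | k. True}) = rotate k w" by blast
  then have "cycle_mult {rotate k w | k. True} a = count_list (rotate k w) a"
    unfolding cycle_mult_def by simp
  also have "\<dots> = count_list w a" by (rule count_list_rotate)
  also have "\<dots> = (if a \<in> set w then 1 else 0)"
    using assms by (simp add: distinct_count_atmost_1 flip: count_mset)
  finally show ?thesis .
qed



lemma decomp:
  fixes V :: "'v set" and out inn :: "'v \<Rightarrow> 'o" and p :: "'v \<Rightarrow> real"
  assumes fin: "finite V" and nn: "\<forall>a\<in>V. p a \<ge> 0"
    and bal: "\<forall>c. (\<Sum>a\<in>{a\<in>V. out a = c}. p a) = (\<Sum>a\<in>{a\<in>V. inn a = c}. p a)"
  shows "\<exists>y. (\<forall>\<omega>\<in>simple_cycle_classes V (\<lambda>a b. out a = inn b). y \<omega> \<ge> 0) \<and>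
     (\<forall>a\<in>V. p a = (\<Sum>\<omega>\<in>simple_cycle_classes V (\<lambda>a b. out a = inn b). y \<omega> * real (cycle_mult \<omega> a)))"
  using nn bal
proof (induction "card {a\<in>V. p a \<noteq> 0}" arbitrary: p rule: less_induct)
  case less
  let ?E = "\<lambda>a b. out a = inn b"
  let ?Cl = "simple_cycle_classes V ?E"
  have finCl: "finite ?Cl" using finite_classes[OF fin] .
  show ?case
  proof (cases "{a\<in>V. p a \<noteq> 0} = {}")
    case True
    then show ?thesis by (intro exI[of _ "\<lambda>_. 0"]) auto
  next
    case False
    define U where "U = {a\<in>V. p a > 0}"
    have UV: "U \<subseteq> V" by (auto simp: U_def)
    have Ueq: "U = {a\<in>V. p a \<noteq> 0}" using less.prems(1) by (force simp: U_def)
    have succ: "\<forall>a\<in>U. \<exists>b\<in>U. ?E a b"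
    proof
      fix a assume aU: "a \<in> U"
      have "p a \<le> (\<Sum>b\<in>{b\<in>V. out b = out a}. p b)"
        by (rule member_le_sum) (use aU less.prems(1) fin in \<open>auto simp: U_def\<close>)
      also have "\<dots> = (\<Sum>b\<in>{b\<in>V. inn b = out a}. p b)" using less.prems(2) by blast
      finally have pos: "0 < (\<Sum>b\<in>{b\<in>V. inn b = out a}. p b)" using aU by (auto simp: U_def)
      show "\<exists>b\<in>U. ?E a b"
      proof (rule ccontr)
        assume "\<not> (\<exists>b\<in>U. ?E a b)"
        then have "\<forall>b\<in>{b\<in>V. inn b = out a}. p b \<le> 0" by (force simp: U_def)
        then have "(\<Sum>b\<in>{b\<in>V. inn b = out a}. p b) \<le> 0" by (intro sum_nonpos) blast
        then show False using pos by simp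
      qed
    qed
    obtain w where w: "is_simple_cycle U ?E w"
      using find_simple_cycle[OF finite_subset[OF UV fin] _ succ] False Ueq by blast
    have wU: "set w \<subseteq> U" and wne: "w \<noteq> []" and wd: "distinct w" and wc: "is_cycle U ?E w"
      using w unfolding is_simple_cycle_def is_cycle_def by auto
    have wcV: "is_cycle V ?E w" using wc UV unfolding is_cycle_def by auto
    define m where "m = Min (p ` set w)"
    have m_in: "m \<in> p ` set w" unfolding m_def using wne by (intro Min_in) auto
    then obtain a0 where a0: "a0 \<in> set w" "p a0 = m" by auto
    have mpos: "m > 0" using a0 wU by (auto simp: U_def)
    have mle: "m \<le> p a" if "a \<in> set w" for a unfolding m_def using that by (intro Min_le) auto
    define p' where "p' = (\<lambda>a. p a - (if a \<in> set w then m else 0))"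
    have nn': "\<forall>a\<in>V. p' a \<ge> 0" using less.prems(1) mle by (auto simp: p'_def)
    have sumA: "(\<Sum>a\<in>{a\<in>V. P a}. p' a) = (\<Sum>a\<in>{a\<in>V. P a}. p a) - m * real (card {a\<in>set w. P a})" for P
    proof -
      have "(\<Sum>a\<in>{a\<in>V. P a}. p' a) = (\<Sum>a\<in>{a\<in>V. P a}. p a) - (\<Sum>a\<in>{a\<in>V. P a}. (if a \<in> set w then m else 0))"
        by (simp add: p'_def sum_subtractf)
      also have "(\<Sum>a\<in>{a\<in>V. P a}. (if a \<in> set w then m else 0)) = m * real (card ({a\<in>V. P a} \<inter> set w))"
        using fin by (simp add: sum.If_cases)
      also have "{a\<in>V. P a} \<inter> set w = {a\<in>set w. P a}" using wU UV by auto
      finally show ?thesis .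
    qed
    have bal': "\<forall>c. (\<Sum>a\<in>{a\<in>V. out a = c}. p' a) = (\<Sum>a\<in>{a\<in>V. inn a = c}. p' a)"
      using less.prems(2) cycle_card_balance[OF wcV wd] by (simp add: sumA)
    have sub: "{a\<in>V. p' a \<noteq> 0} \<subset> {a\<in>V. p a \<noteq> 0}"
    proof -
      have "{a\<in>V. p' a \<noteq> 0} \<subseteq> {a\<in>V. p a \<noteq> 0}" using wU by (auto simp: p'_def U_def)
      moreover have "a0 \<in> {a\<in>V. p a \<noteq> 0}" "a0 \<notin> {a\<in>V. p' a \<noteq> 0}" using a0 wU UV mpos by (auto simp: p'_def)
      ultimately show ?thesis by blast
    qed
    have "card {a\<in>V. p' a \<noteq> 0} < card {a\<in>V. p a \<noteq> 0}"
      using sub fin by (intro psubset_card_mono) auto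
    from less.hyps[OF this nn' bal'] obtain y' where
      y'1: "\<forall>\<omega>\<in>?Cl. y' \<omega> \<ge> 0" and
      y'2: "\<forall>a\<in>V. p' a = (\<Sum>\<omega>\<in>?Cl. y' \<omega> * real (cycle_mult \<omega> a))" by blast
    define \<omega>0 where "\<omega>0 = {rotate k w | k. True}"
    have \<omega>0: "\<omega>0 \<in> ?Cl" unfolding \<omega>0_def simple_cycle_classes_def is_simple_cycle_def
      using wcV wd by blast
    define y where "y = (\<lambda>\<omega>. y' \<omega> + (if \<omega> = \<omega>0 then m else 0))"
    show ?thesis
    proof (intro exI[of _ y] conjI ballI)
      fix \<omega> assume "\<omega> \<in> ?Cl" then show "0 \<le> y \<omega>" using y'1 mpos by (simp add: y_def)
    next
      fix a assume aV: "a \<in> V"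
      have "(\<Sum>\<omega>\<in>?Cl. y \<omega> * real (cycle_mult \<omega> a)) =
          (\<Sum>\<omega>\<in>?Cl. y' \<omega> * real (cycle_mult \<omega> a)) + (\<Sum>\<omega>\<in>?Cl. (if \<omega> = \<omega>0 then m * real (cycle_mult \<omega> a) else 0))"
        by (simp add: y_def distrib_right flip: sum.distrib) (rule sum.cong, auto)
      also have "(\<Sum>\<omega>\<in>?Cl. (if \<omega> = \<omega>0 then m * real (cycle_mult \<omega> a) else 0)) = m * real (cycle_mult \<omega>0 a)"
        using \<omega>0 finCl by (simp add: sum.delta)
      also have "real (cycle_mult \<omega>0 a) = (if a \<in> set w then 1 else 0)"
        unfolding \<omega>0_def using cycle_mult_class[OF wd] by simp
      finally show "p a = (\<Sum>\<omega>\<in>?Cl. y \<omega> * real (cycle_mult \<omega> a))"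
        using y'2[rule_format, OF aV] unfolding p'_def by (cases "a \<in> set w") auto
    qed
  qed
qed



lemma card_filter_diff:
  assumes "finite A" "finite B"
  shows "\<bar>real (card {a\<in>A. Q a}) - real (card {a\<in>B. Q a})\<bar> \<le> real (card ((A - B) \<union> (B - A)))"
proof -
  have fD: "finite ((A - B) \<union> (B - A))" using assms by auto
  have 1: "card {a\<in>A. Q a} \<le> card {a\<in>B. Q a} + card ((A - B) \<union> (B - A))"
  proof -
    have "{a\<in>A. Q a} \<subseteq> {a\<in>B. Q a} \<union> ((A - B) \<union> (B - A))" by auto
    then have "card {a\<in>A. Q a} \<le> card ({a\<in>B. Q a} \<union> ((A - B) \<union> (B - A)))"
      using assms by (intro card_mono) auto
    also have "\<dots> \<le> card {a\<in>B. Q a} + card ((A - B) \<union> (B - A))" by (rule card_Un_le)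
    finally show ?thesis .
  qed
  have 2: "card {a\<in>B. Q a} \<le> card {a\<in>A. Q a} + card ((A - B) \<union> (B - A))"
  proof -
    have "{a\<in>B. Q a} \<subseteq> {a\<in>A. Q a} \<union> ((A - B) \<union> (B - A))" by auto
    then have "card {a\<in>B. Q a} \<le> card ({a\<in>A. Q a} \<union> ((A - B) \<union> (B - A)))"
      using assms by (intro card_mono) auto
    also have "\<dots> \<le> card {a\<in>A. Q a} + card ((A - B) \<union> (B - A))" by (rule card_Un_le)
    finally show ?thesis .
  qed
  show ?thesis using 1 2 by linarith
qed

lemma sum_card_fibres:
  assumes "finite F" "finite T" "h ` F \<subseteq> T"
  shows "(\<Sum>\<tau>\<in>{\<tau>\<in>T. P \<tau>}. real (card {f\<in>F. h f = \<tau>})) = real (card {f\<in>F. P (h f)})"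
proof -
  have "(\<Sum>\<tau>\<in>{\<tau>\<in>T. P \<tau>}. real (card {f\<in>F. h f = \<tau>})) =
        (\<Sum>\<tau>\<in>{\<tau>\<in>T. P \<tau>}. (\<Sum>f\<in>{f\<in>{f\<in>F. P (h f)}. h f = \<tau>}. 1::real))"
  proof (rule sum.cong[OF refl])
    fix \<tau> assume "\<tau> \<in> {\<tau>\<in>T. P \<tau>}"
    then have "{f\<in>{f\<in>F. P (h f)}. h f = \<tau>} = {f\<in>F. h f = \<tau>}" by auto
    then show "real (card {f\<in>F. h f = \<tau>}) = (\<Sum>f\<in>{f\<in>{f\<in>F. P (h f)}. h f = \<tau>}. 1::real)" by simp
  qed
  also have "\<dots> = (\<Sum>f\<in>{f\<in>F. P (h f)}. 1::real)"
    using assms by (intro sum.group) auto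
  finally show ?thesis by simp
qed


lemma (in group) approx:
  assumes am: "amenable_group G" and gsC: "set gs \<subseteq> carrier G" and finT: "finite T"
    and xt: "xt \<in> wang_subshift G gs T" and eps: "\<epsilon> > 0"
  shows "\<exists>p. p \<in> PiE UNIV (\<lambda>\<tau>. if \<tau> \<in> T then {0..1} else {0::real}) \<and> sum p T = 1 \<and>
     (\<forall>g\<in>set gs. \<forall>c. \<bar>(\<Sum>\<tau>\<in>{\<tau>\<in>T. \<tau> g = c}. p \<tau>) - (\<Sum>\<tau>\<in>{\<tau>\<in>T. \<tau> (inv g) = c}. p \<tau>)\<bar> \<le> \<epsilon>)"
proof -
  define K where "K = sym_gens G gs"
  have finK: "finite K" and KC: "K \<subseteq> carrier G" using gsC by (auto simp: K_def sym_gens_def)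
  obtain F where finF: "finite F" and Fne: "F \<noteq> {}" and FC: "F \<subseteq> carrier G" and
    Fol: "\<forall>k\<in>K. real (card ((((\<lambda>f. k \<otimes> f) ` F) - F) \<union> (F - ((\<lambda>f. k \<otimes> f) ` F)))) \<le> \<epsilon> * real (card F)"
  proof -
    have "\<forall>K (\<epsilon>::real). finite K \<and> K \<subseteq> carrier G \<and> \<epsilon> > 0 \<longrightarrow>
        (\<exists>F. finite F \<and> F \<noteq> {} \<and> F \<subseteq> carrier G \<and>
             (\<forall>k\<in>K. real (card ((((\<lambda>f. k \<otimes> f) ` F) - F) \<union> (F - ((\<lambda>f. k \<otimes> f) ` F))))
                      \<le> \<epsilon> * real (card F)))"
      using am unfolding amenable_group_def by (rule conjunct2)
    then have "finite K \<and> K \<subseteq> carrier G \<and> \<epsilon> > 0 \<longrightarrow>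
        (\<exists>F. finite F \<and> F \<noteq> {} \<and> F \<subseteq> carrier G \<and>
             (\<forall>k\<in>K. real (card ((((\<lambda>f. k \<otimes> f) ` F) - F) \<union> (F - ((\<lambda>f. k \<otimes> f) ` F))))
                      \<le> \<epsilon> * real (card F)))"
      by (drule_tac x=K in spec, drule_tac x=\<epsilon> in spec)
    then have "\<exists>F. finite F \<and> F \<noteq> {} \<and> F \<subseteq> carrier G \<and>
             (\<forall>k\<in>K. real (card ((((\<lambda>f. k \<otimes> f) ` F) - F) \<union> (F - ((\<lambda>f. k \<otimes> f) ` F))))
                      \<le> \<epsilon> * real (card F))"
      by (rule mp) (use finK KC eps in simp)
    then show ?thesis using that by blast
  qed
  have xtT: "xt \<in> carrier G \<rightarrow> T" and xtw: "\<forall>g\<in>carrier G. \<forall>s\<in>K. xt g s = xt (g \<otimes> s) (inv s)"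
    using xt by (auto simp: wang_subshift_def K_def)
  define h where "h f = xt (inv f)" for f
  have hT: "h ` F \<subseteq> T" using xtT FC by (auto simp: h_def)
  have cF: "real (card F) > 0" using finF Fne by (simp add: card_gt_0_iff)
  define p where "p \<tau> = (if \<tau> \<in> T then real (card {f\<in>F. h f = \<tau>}) / real (card F) else 0)" for \<tau>
  have sump: "(\<Sum>\<tau>\<in>{\<tau>\<in>T. P \<tau>}. p \<tau>) = real (card {f\<in>F. P (h f)}) / real (card F)" for P
  proof -
    have "(\<Sum>\<tau>\<in>{\<tau>\<in>T. P \<tau>}. p \<tau>) = (\<Sum>\<tau>\<in>{\<tau>\<in>T. P \<tau>}. real (card {f\<in>F. h f = \<tau>}) / real (card F))"
      by (rule sum.cong) (auto simp: p_def)
    also have "\<dots> = (\<Sum>\<tau>\<in>{\<tau>\<in>T. P \<tau>}. real (card {f\<in>F. h f = \<tau>})) / real (card F)"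
      by (simp add: sum_divide_distrib)
    also have "\<dots> = real (card {f\<in>F. P (h f)}) / real (card F)"
      using sum_card_fibres[OF finF finT hT] by simp
    finally show ?thesis .
  qed
  have "p \<in> PiE UNIV (\<lambda>\<tau>. if \<tau> \<in> T then {0..1} else {0::real})"
  proof -
    have "card {f\<in>F. h f = \<tau>} \<le> card F" for \<tau> using finF by (intro card_mono) auto
    then show ?thesis using cF by (auto simp: p_def PiE_def Pi_def divide_le_eq_1)
  qed
  moreover have "sum p T = 1"
    using sump[of "\<lambda>_. True"] cF by simp
  moreover have "\<bar>(\<Sum>\<tau>\<in>{\<tau>\<in>T. \<tau> g = c}. p \<tau>) - (\<Sum>\<tau>\<in>{\<tau>\<in>T. \<tau> (inv g) = c}. p \<tau>)\<bar> \<le> \<epsilon>"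
    if gS: "g \<in> set gs" for g c
  proof -
    have gC: "g \<in> carrier G" using gS gsC by auto
    define k where "k = inv g"
    have kK: "k \<in> K" using gS by (auto simp: K_def sym_gens_def k_def)
    have kC: "k \<in> carrier G" using gC by (simp add: k_def)
    have gK: "g \<in> K" using gS by (auto simp: K_def sym_gens_def)
    define Q where "Q f = (h f (inv g) = c)" for f
    have eq1: "{f\<in>F. h f g = c} = {f\<in>F. Q (k \<otimes> f)}"
    proof -
      have "h f g = h (k \<otimes> f) (inv g)" if "f \<in> F" for f
      proof -
        have fC: "f \<in> carrier G" using that FC by auto
        have "h f g = xt (inv f \<otimes> g) (inv g)" unfolding h_def using xtw fC gK by (meson inv_closed)
        moreover have "inv (k \<otimes> f) = inv f \<otimes> g" using fC gC by (simp add: k_def inv_mult_group)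
        ultimately show ?thesis by (simp add: h_def)
      qed
      then show ?thesis by (auto simp: Q_def)
    qed
    have eq2: "card {f\<in>F. Q (k \<otimes> f)} = card {f'\<in>(\<lambda>f. k \<otimes> f) ` F. Q f'}"
    proof -
      have "{f'\<in>(\<lambda>f. k \<otimes> f) ` F. Q f'} = (\<lambda>f. k \<otimes> f) ` {f\<in>F. Q (k \<otimes> f)}" by auto
      moreover have "inj_on (\<lambda>f. k \<otimes> f) {f\<in>F. Q (k \<otimes> f)}"
        by (rule inj_on_subset[OF inj_on_cmult[OF kC]]) (use FC in auto)
      ultimately show ?thesis by (simp add: card_image)
    qed
    have eq3: "{\<tau>\<in>T. \<tau> (inv g) = c} = {\<tau>\<in>T. (\<lambda>\<tau>. \<tau> (inv g) = c) \<tau>}" by simp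
    have "\<bar>real (card {f'\<in>(\<lambda>f. k \<otimes> f) ` F. Q f'}) - real (card {f\<in>F. Q f})\<bar>
        \<le> real (card ((((\<lambda>f. k \<otimes> f) ` F) - F) \<union> (F - ((\<lambda>f. k \<otimes> f) ` F))))"
      using finF by (intro card_filter_diff) auto
    also have "\<dots> \<le> \<epsilon> * real (card F)" using Fol kK by blast
    finally have bd: "\<bar>real (card {f\<in>F. h f g = c}) - real (card {f\<in>F. Q f})\<bar> \<le> \<epsilon> * real (card F)"
      using eq1 eq2 by simp
    have "(\<Sum>\<tau>\<in>{\<tau>\<in>T. \<tau> g = c}. p \<tau>) - (\<Sum>\<tau>\<in>{\<tau>\<in>T. \<tau> (inv g) = c}. p \<tau>)
        = (real (card {f\<in>F. h f g = c}) - real (card {f\<in>F. Q f})) / real (card F)"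
      using sump[of "\<lambda>\<tau>. \<tau> g = c"] sump[of "\<lambda>\<tau>. \<tau> (inv g) = c"] unfolding Q_def by (simp only: diff_divide_distrib)
    then show ?thesis using bd cF by (metis abs_divide abs_of_pos pos_divide_le_eq)
  qed
  ultimately show ?thesis by blast
qed



lemma cpt: "compact (PiE UNIV (\<lambda>i::'a. S i :: real set))" if "\<And>i. compact (S i)"
proof -
  have "compactin (product_topology (\<lambda>i. euclidean) UNIV) (PiE UNIV S)"
    by (simp add: compactin_PiE that)
  then show ?thesis by (simp add: euclidean_product_topology)
qed

lemma small_zero:
  fixes d :: real
  assumes "\<forall>n. \<bar>d\<bar> \<le> 1 / real (Suc n)"
  shows "d = 0"
proof (rule ccontr)
  assume "d \<noteq> 0"
  then have "\<bar>d\<bar> > 0" by simp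
  then obtain n where n: "n > 0" "inverse (real n) < \<bar>d\<bar>" using ex_inverse_of_nat_less by blast
  then have "Suc (n - 1) = n" by simp
  then show False using assms[rule_format, of "n - 1"] n by (simp add: inverse_eq_divide)
qed

lemma contsum: "continuous_on UNIV (\<lambda>p::'a \<Rightarrow> real. \<Sum>\<tau>\<in>A. p \<tau>)"
  by (intro continuous_on_sum) simp

lemma (in group) exact_solution:
  assumes am: "amenable_group G" and gsC: "set gs \<subseteq> carrier G" and finT: "finite T"
    and xt: "xt \<in> wang_subshift G gs T"
  shows "\<exists>p. (\<forall>\<tau>\<in>T. p \<tau> \<ge> (0::real)) \<and> sum p T = 1 \<and>
     (\<forall>g\<in>set gs. \<forall>c. (\<Sum>\<tau>\<in>{\<tau>\<in>T. \<tau> g = c}. p \<tau>) = (\<Sum>\<tau>\<in>{\<tau>\<in>T. \<tau> (inv g) = c}. p \<tau>))"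
proof -
  define S0 where "S0 = PiE UNIV (\<lambda>\<tau>. if \<tau> \<in> T then {0..1} else {0::real})"
  define Kn where "Kn n = {p. sum p T = 1} \<inter> (\<Inter>g\<in>set gs. \<Inter>c. {p. \<bar>(\<Sum>\<tau>\<in>{\<tau>\<in>T. \<tau> g = c}. p \<tau>) - (\<Sum>\<tau>\<in>{\<tau>\<in>T. \<tau> (inv g) = c}. p \<tau>)\<bar> \<le> 1 / real (Suc n)})" for n
  have cS0: "compact S0" unfolding S0_def by (rule cpt) simp
  have clK: "closed (Kn n)" for n
    unfolding Kn_def
    by (intro closed_Int closed_INT ballI closed_Collect_eq closed_Collect_le continuous_intros contsum) simp_all
  have "S0 \<inter> (\<Inter>n\<in>UNIV. Kn n) \<noteq> {}"
  proof (rule compact_imp_fip_image[OF cS0 clK])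
    fix I' :: "nat set" assume fI: "finite I'"
    define N where "N = Max (insert 0 I')"
    have iN: "i \<le> N" if "i \<in> I'" for i unfolding N_def using fI that by simp
    obtain p where p1: "p \<in> S0" and p2: "sum p T = 1" and
      p3: "\<forall>g\<in>set gs. \<forall>c. \<bar>(\<Sum>\<tau>\<in>{\<tau>\<in>T. \<tau> g = c}. p \<tau>) - (\<Sum>\<tau>\<in>{\<tau>\<in>T. \<tau> (inv g) = c}. p \<tau>)\<bar> \<le> 1 / real (Suc N)"
      using approx[OF am gsC finT xt, of "1 / real (Suc N)"] unfolding S0_def by auto
    have "p \<in> Kn i" if "i \<in> I'" for i
    proof -
      have "1 / real (Suc N) \<le> 1 / real (Suc i)" using iN[OF that] by (simp add: frac_le)
      then have "\<forall>g\<in>set gs. \<forall>c. \<bar>(\<Sum>\<tau>\<in>{\<tau>\<in>T. \<tau> g = c}. p \<tau>) - (\<Sum>\<tau>\<in>{\<tau>\<in>T. \<tau> (inv g) = c}. p \<tau>)\<bar> \<le> 1 / real (Suc i)"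
        using p3 by (meson order_trans)
      then show ?thesis using p2 unfolding Kn_def by blast
    qed
    then show "S0 \<inter> (\<Inter>i\<in>I'. Kn i) \<noteq> {}" using p1 by blast
  qed
  then obtain p where pS: "p \<in> S0" and pK: "\<forall>n. p \<in> Kn n" by blast
  have "\<forall>\<tau>\<in>T. p \<tau> \<ge> 0" using pS unfolding S0_def by (auto simp: PiE_iff) (metis atLeastAtMost_iff)
  moreover have "sum p T = 1" using pK unfolding Kn_def by blast
  moreover have "(\<Sum>\<tau>\<in>{\<tau>\<in>T. \<tau> g = c}. p \<tau>) = (\<Sum>\<tau>\<in>{\<tau>\<in>T. \<tau> (inv g) = c}. p \<tau>)"
    if "g \<in> set gs" for g c
  proof -
    have "\<forall>n. \<bar>(\<Sum>\<tau>\<in>{\<tau>\<in>T. \<tau> g = c}. p \<tau>) - (\<Sum>\<tau>\<in>{\<tau>\<in>T. \<tau> (inv g) = c}. p \<tau>)\<bar> \<le> 1 / real (Suc n)"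
      using pK that unfolding Kn_def by blast
    then show ?thesis using small_zero by fastforce
  qed
  ultimately show ?thesis by blast
qed



theorem mainTheorem3:
  fixes G :: "('g, 'b) monoid_scheme" and gs :: "'g list"
    and C :: "'c set" and T :: "('g \<Rightarrow> 'c) set"
  assumes "amenable_group G"
    and "gs \<noteq> []" and "distinct gs" and "set gs \<subseteq> carrier G"
    and "generate G (set gs) = carrier G"
    and "finite C"
    and "finite T" and "T \<subseteq> sym_gens G gs \<rightarrow>\<^sub>E C"
    and "wang_subshift G gs T \<noteq> {}"
  shows "cond_star_star G gs T"
proof -
  have grp: "group G" using assms(1) unfolding amenable_group_def by (rule conjunct1)
  obtain xt where xt: "xt \<in> wang_subshift G gs T" using assms(9) by (meson ex_in_conv)
  have ex: "\<exists>p. (\<forall>\<tau>\<in>T. p \<tau> \<ge> (0::real)) \<and> sum p T = 1 \<and>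
     (\<forall>g\<in>set gs. \<forall>c. (\<Sum>\<tau>\<in>{\<tau>\<in>T. \<tau> g = c}. p \<tau>) = (\<Sum>\<tau>\<in>{\<tau>\<in>T. \<tau> (inv\<^bsub>G\<^esub> g) = c}. p \<tau>))"
    using group.exact_solution[OF grp assms(1) assms(4) assms(7) xt] .
  then obtain p where pall: "(\<forall>\<tau>\<in>T. p \<tau> \<ge> (0::real)) \<and> sum p T = 1 \<and>
     (\<forall>g\<in>set gs. \<forall>c. (\<Sum>\<tau>\<in>{\<tau>\<in>T. \<tau> g = c}. p \<tau>) = (\<Sum>\<tau>\<in>{\<tau>\<in>T. \<tau> (inv\<^bsub>G\<^esub> g) = c}. p \<tau>))"
    by (rule exE)
  have p0: "\<forall>\<tau>\<in>T. p \<tau> \<ge> 0" by (rule conjunct1[OF pall])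
  have p1: "sum p T = 1" by (rule conjunct1[OF conjunct2[OF pall]])
  have pb: "\<forall>g\<in>set gs. \<forall>c. (\<Sum>\<tau>\<in>{\<tau>\<in>T. \<tau> g = c}. p \<tau>) = (\<Sum>\<tau>\<in>{\<tau>\<in>T. \<tau> (inv\<^bsub>G\<^esub> g) = c}. p \<tau>)"
    by (rule conjunct2[OF conjunct2[OF pall]])
  have edge: "wang_edge G gs i = (\<lambda>a b. a (gs ! i) = b (inv\<^bsub>G\<^esub> (gs ! i)))" for i
    unfolding wang_edge_def by (intro ext) (rule refl)
  have "\<forall>i. \<exists>y. i < length gs \<longrightarrow>
     ((\<forall>\<omega>\<in>simple_cycle_classes T (wang_edge G gs i). y \<omega> \<ge> 0) \<and>
      (\<forall>a\<in>T. p a = (\<Sum>\<omega>\<in>simple_cycle_classes T (wang_edge G gs i). y \<omega> * real (cycle_mult \<omega> a))))"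
  proof
    fix i
    show "\<exists>y. i < length gs \<longrightarrow>
     ((\<forall>\<omega>\<in>simple_cycle_classes T (wang_edge G gs i). y \<omega> \<ge> 0) \<and>
      (\<forall>a\<in>T. p a = (\<Sum>\<omega>\<in>simple_cycle_classes T (wang_edge G gs i). y \<omega> * real (cycle_mult \<omega> a))))"
    proof (cases "i < length gs")
      case True
      then have g: "gs ! i \<in> set gs" by simp
      have "\<exists>y. (\<forall>\<omega>\<in>simple_cycle_classes T (\<lambda>a b. a (gs ! i) = b (inv\<^bsub>G\<^esub> (gs ! i))). y \<omega> \<ge> 0) \<and>
        (\<forall>a\<in>T. p a = (\<Sum>\<omega>\<in>simple_cycle_classes T (\<lambda>a b. a (gs ! i) = b (inv\<^bsub>G\<^esub> (gs ! i))). y \<omega> * real (cycle_mult \<omega> a)))"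
      proof -
        have bal: "\<forall>c. (\<Sum>a\<in>{a\<in>T. a (gs ! i) = c}. p a) = (\<Sum>a\<in>{a\<in>T. a (inv\<^bsub>G\<^esub> (gs ! i)) = c}. p a)"
          using pb g by blast
        show ?thesis using decomp[OF assms(7) p0 bal] .
      qed
      then show ?thesis unfolding edge by blast
    next
      case False then show ?thesis by blast
    qed
  qed
  from choice[OF this] obtain Y where Y: "\<forall>i. i < length gs \<longrightarrow>
     ((\<forall>\<omega>\<in>simple_cycle_classes T (wang_edge G gs i). Y i \<omega> \<ge> 0) \<and>
      (\<forall>a\<in>T. p a = (\<Sum>\<omega>\<in>simple_cycle_classes T (wang_edge G gs i). Y i \<omega> * real (cycle_mult \<omega> a))))"
    by blast
  have "\<exists>a\<in>T. p a \<noteq> 0"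
  proof (rule ccontr)
    assume "\<not> (\<exists>a\<in>T. p a \<noteq> 0)"
    then have "sum p T = 0" by (intro sum.neutral) blast
    then show False using p1 by simp
  qed
  then obtain a0 where a0: "a0 \<in> T" "p a0 \<noteq> 0" by blast
  have nz: "(\<Sum>\<omega>\<in>simple_cycle_classes T (wang_edge G gs i). Y i \<omega> * real (cycle_mult \<omega> a0)) \<noteq> 0"
    if "i < length gs" for i
  proof -
    have "p a0 = (\<Sum>\<omega>\<in>simple_cycle_classes T (wang_edge G gs i). Y i \<omega> * real (cycle_mult \<omega> a0))"
      using Y that a0(1) by blast
    then show ?thesis using a0(2) by simp
  qed
  show ?thesis
    unfolding cond_star_star_def
  proof (intro conjI exI[of _ Y])
    show "\<forall>i<length gs. \<exists>w. is_cycle T (wang_edge G gs i) w"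
    proof (intro allI impI)
      fix i assume i: "i < length gs"
      have "simple_cycle_classes T (wang_edge G gs i) \<noteq> {}"
      proof
        assume "simple_cycle_classes T (wang_edge G gs i) = {}"
        then show False using nz[OF i] by simp
      qed
      then obtain w where "is_simple_cycle T (wang_edge G gs i) w"
        unfolding simple_cycle_classes_def by blast
      then show "\<exists>w. is_cycle T (wang_edge G gs i) w" unfolding is_simple_cycle_def by blast
    qed
  next
    show "\<forall>i<length gs. \<forall>\<omega>\<in>simple_cycle_classes T (wang_edge G gs i). 0 \<le> Y i \<omega>"
      using Y by blast
  next
    have l: "0 < length gs" using assms(2) by simp
    have "\<exists>\<omega>\<in>simple_cycle_classes T (wang_edge G gs 0). Y 0 \<omega> \<noteq> 0"
    proof (rule ccontr)
      assume "\<not> (\<exists>\<omega>\<in>simple_cycle_classes T (wang_edge G gs 0). Y 0 \<omega> \<noteq> 0)"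
      then have "(\<Sum>\<omega>\<in>simple_cycle_classes T (wang_edge G gs 0). Y 0 \<omega> * real (cycle_mult \<omega> a0)) = 0"
        by (intro sum.neutral) simp
      then show False using nz[OF l] by simp
    qed
    then show "\<exists>i<length gs. \<exists>\<omega>\<in>simple_cycle_classes T (wang_edge G gs i). Y i \<omega> \<noteq> 0"
      using l by blast
  next
    show "\<forall>a\<in>T. \<forall>i<length gs. \<forall>j<length gs.
       (\<Sum>\<omega>\<in>simple_cycle_classes T (wang_edge G gs i). Y i \<omega> * real (cycle_mult \<omega> a)) =
       (\<Sum>\<omega>\<in>simple_cycle_classes T (wang_edge G gs j). Y j \<omega> * real (cycle_mult \<omega> a))"
    proof (intro ballI allI impI)
      fix a i j assume a: "a \<in> T" and i: "i < length gs" and j: "j < length gs"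
      have 1: "p a = (\<Sum>\<omega>\<in>simple_cycle_classes T (wang_edge G gs i). Y i \<omega> * real (cycle_mult \<omega> a))"
        using Y a i by blast
      have 2: "p a = (\<Sum>\<omega>\<in>simple_cycle_classes T (wang_edge G gs j). Y j \<omega> * real (cycle_mult \<omega> a))"
        using Y a j by blast
      show "(\<Sum>\<omega>\<in>simple_cycle_classes T (wang_edge G gs i). Y i \<omega> * real (cycle_mult \<omega> a)) =
       (\<Sum>\<omega>\<in>simple_cycle_classes T (wang_edge G gs j). Y j \<omega> * real (cycle_mult \<omega> a))"
        using 1 2 by simp
    qed
  qed
qed


end
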